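(* Consider the following problem (One-Shot TAPF). Given: a connected undirected graph $G=(V,E)$; $N$ stations $s_1,\dots,s_N$, each with a distinct target vertex $g_j\in V$; $M$ agents $a_1,\dots,a_M$, where agent $a_i$ has a start vertex $\mathfrak{s}_i\in V$ and a start time step $t_i\in\{0,\dots,(K-1)T\}$; a processing time $T\in\mathbb{Z}_{>0}$ and an integer $K\ge1$. The time window $[0,KT)$ of each station is divided into working slots $[kT,(k+1)T)$, $k=0,\dots,K-1$. A solution assigns to each agent either the NULL station (the agent is inactive, has no path and is removed from the environment) or a station $s_j$ together with a path $\pi_i$, i.e. a sequence of vertices $\pi_i(t_i)=\mathfrak{s}_i,\pi_i(t_i+1),\dots,\pi_i(kT)=g_j$ for some $k\in\{0,\dots,K-1\}$ with $kT\ge t_i$, where for each consecutive time steps either $(\pi_i(t),\pi_i(t+1))\in E$ or $\pi_i(t+1)=\pi_i(t)$; the agent then occupies working slot $[kT,(k+1)T)$ of station $s_j$ and is removed from the graph from time step $kT+1$ on. Paths of active agents must be collision-free: no two agents occupy the same vertex at the same time step, and no two agents traverse the same edge in opposite directions between the same two consecutive time steps. The total idle time is $T$ times the number of unoccupied working slots summed over all stations. Define the unweighted PITO flow network: a source, a sink, an agent vertex $a_i$ per agent; for every $u\in V$ and $t=0,\dots,(K-1)T$ a location vertex $u_t$ and an auxiliary vertex $u'_t$ with a capacity-$1$ edge $u_t\to u'_t$; for every edge $(u,v)\in E$ and $t=0,\dots,(K-1)T-1$, capacity-$1$ edges $u'_t\to v_{t+1}$ and $v'_t\to u_{t+1}$,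 and for every $u\in V$ and $t=0,\dots,(K-1)T-1$ a capacity-$1$ waiting edge $u'_t\to u_{t+1}$; capacity-$1$ edges source $\to a_i$ and $a_i\to(\mathfrak{s}_i)_{t_i}$; for each station $s_j$ and $k=0,\dots,K-1$ a working slot vertex $s_{j,k}$ with a capacity-$1$ edge $(g_j)'_{kT}\to s_{j,k}$ and a capacity-$1$ edge $s_{j,k}\to$ sink; and for $k=1,\dots,K-1$ an edge $s_{j,k-1}\to s_{j,k}$ of capacity $K$. Then a maximum (integral) flow on the unweighted PITO flow network corresponds to an assignment of stations to agents and collision-free paths for all active agents to their assigned stations (agents carrying no flow being assigned the NULL station) that together minimize the total idle time within the time window $[0,KT)$.
   Context: Edge collisions (two agents swapping along an edge) in a flow solution are resolved by a post-processing that swaps the identities of the two agents and lets them wait one time step; the agents are treated as interchangeable in the flow. An agent at target $g_j$ at time step $kT$ may occupy working slot $[kT,(k+1)T)$ of station $s_j$, with at most one agent per working slot. *)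

theory Defs
  imports Main
begin

text \<open>Vertices of the unweighted PITO flow network.
  Loc u t = u_t, Aux u t = u'_t, Slot j k = working slot vertex s_{j,k}.
  Stations are indexed 0..N-1, agents 0..M-1.\<close>

datatype 'v pnode = Src | Snk | Agent nat | Loc 'v nat | Aux 'v nat | Slot nat nat

text \<open>Capacities of the PITO network (0 = no edge).  E is a symmetric edge relation,
  so each undirected edge {u,v} yields both u'_t -> v_{t+1} and v'_t -> u_{t+1};
  the case u = v is the waiting edge.\<close>

definition pito_cap ::
  "'v set \<Rightarrow> ('v \<times> 'v) set \<Rightarrow> nat \<Rightarrow> (nat \<Rightarrow> 'v) \<Rightarrow> nat \<Rightarrow> (nat \<Rightarrow> 'v) \<Rightarrow> (nat \<Rightarrow> nat)
   \<Rightarrow> nat \<Rightarrow> nat \<Rightarrow> 'v pnode \<Rightarrow> 'v pnode \<Rightarrow> nat" where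
  "pito_cap V E N g M sv st T K x y =
    (case x of
       Src \<Rightarrow> (case y of Agent i \<Rightarrow> if i < M then 1 else 0 | _ \<Rightarrow> 0)
     | Agent i \<Rightarrow> (case y of Loc u t \<Rightarrow> if i < M \<and> u = sv i \<and> t = st i then 1 else 0 | _ \<Rightarrow> 0)
     | Loc u t \<Rightarrow> (case y of Aux u' t' \<Rightarrow>
           if u \<in> V \<and> u' = u \<and> t' = t \<and> t \<le> (K - 1) * T then 1 else 0 | _ \<Rightarrow> 0)
     | Aux u t \<Rightarrow> (case y of
           Loc v t' \<Rightarrow> if u \<in> V \<and> v \<in> V \<and> t' = Suc t \<and> t < (K - 1) * T
                          \<and> ((u, v) \<in> E \<or> v = u) then 1 else 0
         | Slot j k \<Rightarrow> if j < N \<and> k < K \<and> u = g j \<and> t = k * T then 1 else 0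
         | _ \<Rightarrow> 0)
     | Slot j k \<Rightarrow> (case y of
           Snk \<Rightarrow> if j < N \<and> k < K then 1 else 0
         | Slot j' k' \<Rightarrow> if j < N \<and> j' = j \<and> k' = Suc k \<and> k' < K then K else 0
         | _ \<Rightarrow> 0)
     | Snk \<Rightarrow> 0)"

definition pito_nodes :: "'v set \<Rightarrow> nat \<Rightarrow> nat \<Rightarrow> nat \<Rightarrow> nat \<Rightarrow> 'v pnode set" where
  "pito_nodes V N M T K =
     {Src, Snk} \<union> Agent ` {..<M}
     \<union> (\<lambda>(u, t). Loc u t) ` (V \<times> {..(K - 1) * T})
     \<union> (\<lambda>(u, t). Aux u t) ` (V \<times> {..(K - 1) * T})
     \<union> (\<lambda>(j, k). Slot j k) ` ({..<N} \<times> {..<K})"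

definition pito_flow ::
  "'v set \<Rightarrow> ('v \<times> 'v) set \<Rightarrow> nat \<Rightarrow> (nat \<Rightarrow> 'v) \<Rightarrow> nat \<Rightarrow> (nat \<Rightarrow> 'v) \<Rightarrow> (nat \<Rightarrow> nat)
   \<Rightarrow> nat \<Rightarrow> nat \<Rightarrow> ('v pnode \<Rightarrow> 'v pnode \<Rightarrow> nat) \<Rightarrow> bool" where
  "pito_flow V E N g M sv st T K f \<longleftrightarrow>
     (\<forall>x y. f x y \<le> pito_cap V E N g M sv st T K x y) \<and>
     (\<forall>x \<in> pito_nodes V N M T K - {Src, Snk}.
        (\<Sum>y\<in>pito_nodes V N M T K. f y x) = (\<Sum>y\<in>pito_nodes V N M T K. f x y))"

definition flow_value :: "'v set \<Rightarrow> nat \<Rightarrow> nat \<Rightarrow> nat \<Rightarrow> nat \<Rightarrow> ('v pnode \<Rightarrow> 'v pnode \<Rightarrow> nat) \<Rightarrow> nat" where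
  "flow_value V N M T K f = (\<Sum>y\<in>pito_nodes V N M T K. f Src y)"

definition pito_max_flow ::
  "'v set \<Rightarrow> ('v \<times> 'v) set \<Rightarrow> nat \<Rightarrow> (nat \<Rightarrow> 'v) \<Rightarrow> nat \<Rightarrow> (nat \<Rightarrow> 'v) \<Rightarrow> (nat \<Rightarrow> nat)
   \<Rightarrow> nat \<Rightarrow> nat \<Rightarrow> ('v pnode \<Rightarrow> 'v pnode \<Rightarrow> nat) \<Rightarrow> bool" where
  "pito_max_flow V E N g M sv st T K f \<longleftrightarrow>
     pito_flow V E N g M sv st T K f \<and>
     (\<forall>f'. pito_flow V E N g M sv st T K f' \<longrightarrow> flow_value V N M T K f' \<le> flow_value V N M T K f)"

text \<open>Solutions of One-Shot TAPF.  asg i = None: NULL station (inactive agent);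
  asg i = Some j: station j, agent reaches g j at time step kk i * T along path pi i
  (pi i t for st i \<le> t \<le> kk i * T) and occupies working slot kk i of station j.\<close>

definition present :: "(nat \<Rightarrow> nat) \<Rightarrow> (nat \<Rightarrow> nat option) \<Rightarrow> (nat \<Rightarrow> nat) \<Rightarrow> nat \<Rightarrow> nat \<Rightarrow> nat \<Rightarrow> bool" where
  "present st asg kk T i t \<longleftrightarrow> asg i \<noteq> None \<and> st i \<le> t \<and> t \<le> kk i * T"

definition tapf_solution ::
  "('v \<times> 'v) set \<Rightarrow> nat \<Rightarrow> (nat \<Rightarrow> 'v) \<Rightarrow> nat \<Rightarrow> (nat \<Rightarrow> 'v) \<Rightarrow> (nat \<Rightarrow> nat)
   \<Rightarrow> nat \<Rightarrow> nat \<Rightarrow> (nat \<Rightarrow> nat option) \<Rightarrow> (nat \<Rightarrow> nat) \<Rightarrow> (nat \<Rightarrow> nat \<Rightarrow> 'v) \<Rightarrow> bool" where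
  "tapf_solution E N g M sv st T K asg kk \<pi> \<longleftrightarrow>
     (\<forall>i<M. \<forall>j. asg i = Some j \<longrightarrow>
        j < N \<and> kk i < K \<and> st i \<le> kk i * T \<and>
        \<pi> i (st i) = sv i \<and> \<pi> i (kk i * T) = g j \<and>
        (\<forall>t. st i \<le> t \<and> t < kk i * T \<longrightarrow>
             (\<pi> i t, \<pi> i (Suc t)) \<in> E \<or> \<pi> i (Suc t) = \<pi> i t)) \<and>
     (\<forall>i<M. \<forall>i'<M. i \<noteq> i' \<longrightarrow> asg i \<noteq> None \<longrightarrow> asg i = asg i' \<longrightarrow> kk i \<noteq> kk i') \<and>
     (\<forall>i<M. \<forall>i'<M. \<forall>t. i \<noteq> i' \<longrightarrow> present st asg kk T i t \<longrightarrow> present st asg kk T i' t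
        \<longrightarrow> \<pi> i t \<noteq> \<pi> i' t) \<and>
     (\<forall>i<M. \<forall>i'<M. \<forall>t. i \<noteq> i' \<longrightarrow>
        present st asg kk T i t \<longrightarrow> present st asg kk T i (Suc t) \<longrightarrow>
        present st asg kk T i' t \<longrightarrow> present st asg kk T i' (Suc t) \<longrightarrow>
        \<not> (\<pi> i t = \<pi> i' (Suc t) \<and> \<pi> i (Suc t) = \<pi> i' t))"

definition occupied_slots :: "nat \<Rightarrow> nat \<Rightarrow> nat \<Rightarrow> (nat \<Rightarrow> nat option) \<Rightarrow> (nat \<Rightarrow> nat) \<Rightarrow> (nat \<times> nat) set" where
  "occupied_slots N M K asg kk = {(j, k). j < N \<and> k < K \<and> (\<exists>i<M. asg i = Some j \<and> kk i = k)}"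

definition idle_time :: "nat \<Rightarrow> nat \<Rightarrow> nat \<Rightarrow> nat \<Rightarrow> (nat \<Rightarrow> nat option) \<Rightarrow> (nat \<Rightarrow> nat) \<Rightarrow> nat" where
  "idle_time N M T K asg kk = T * (N * K - card (occupied_slots N M K asg kk))"

end

theory Submission
  imports Defs
begin


lemma sum_le2:
  fixes h :: "'a \<Rightarrow> nat"
  assumes "finite S" "a \<in> S" "b \<in> S" "a \<noteq> b"
  shows "h a + h b \<le> sum h S"
proof -
  have "sum h {a, b} \<le> sum h S" using assms by (intro sum_mono2) auto
  thus ?thesis using assms by simp
qed

lemma sum_single:
  fixes h :: "'a \<Rightarrow> nat"
  assumes "finite S" "a \<in> S" "\<forall>y\<in>S. y \<noteq> a \<longrightarrow> h y = 0"
  shows "sum h S = h a"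
proof -
  have "sum h S = sum h {a}" using assms by (intro sum.mono_neutral_right) auto
  thus ?thesis by simp
qed

lemma sum_pos_ex:
  fixes h :: "'a \<Rightarrow> nat"
  assumes "sum h S \<noteq> 0"
  shows "\<exists>y\<in>S. h y \<noteq> 0"
proof (rule ccontr)
  assume "\<not> ?thesis"
  then have "\<forall>y\<in>S. h y = 0" by blast
  then have "sum h S = 0" by simp
  with assms show False by simp
qed

locale pctx =
  fixes V :: "'v set" and E :: "('v \<times> 'v) set"
    and N M T K :: nat and g :: "nat \<Rightarrow> 'v" and sv :: "nat \<Rightarrow> 'v" and st :: "nat \<Rightarrow> nat"
  assumes finV: "finite V" and EV: "E \<subseteq> V \<times> V"
    and gV: "\<forall>j<N. g j \<in> V" and ginj: "inj_on g {..<N}"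
    and svV: "\<forall>i<M. sv i \<in> V \<and> st i \<le> (K - 1) * T"
    and Tpos: "T > 0" and Kpos: "K \<ge> 1"
begin

abbreviation "cap \<equiv> pito_cap V E N g M sv st T K"
abbreviation "S \<equiv> pito_nodes V N M T K"
abbreviation "flow \<equiv> pito_flow V E N g M sv st T K"

lemma mem_S:
  "Src \<in> S" "Snk \<in> S" "Agent i \<in> S \<longleftrightarrow> i < M"
  "Loc u t \<in> S \<longleftrightarrow> u \<in> V \<and> t \<le> (K - 1) * T"
  "Aux u t \<in> S \<longleftrightarrow> u \<in> V \<and> t \<le> (K - 1) * T"
  "Slot j k \<in> S \<longleftrightarrow> j < N \<and> k < K"
  unfolding pito_nodes_def by auto

lemma finS: "finite S"
  unfolding pito_nodes_def using finV by auto

lemma cap_nodes: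
  assumes "cap x y \<noteq> 0" shows "x \<in> S \<and> y \<in> S"
proof -
  have kk: "\<And>k. k < K \<Longrightarrow> k * T \<le> (K - 1) * T" by (intro mult_le_mono1) simp
  have sv1: "\<And>i. i < M \<Longrightarrow> sv i \<in> V" and st1: "\<And>i. i < M \<Longrightarrow> st i \<le> (K - 1) * T"
    and g1: "\<And>j. j < N \<Longrightarrow> g j \<in> V" using svV gV by auto
  show ?thesis
  using assms
  apply (cases x; cases y)
  apply (simp_all add: pito_cap_def mem_S split: if_splits)
   apply (simp add: sv1 st1[simplified])
  apply (simp add: g1)
  apply arith
  done
qed

lemma cap_le1: "\<not> (\<exists>j k. x = Slot j k \<and> (\<exists>k'. y = Slot j k')) \<Longrightarrow> cap x y \<le> 1"
  by (cases x; cases y) (auto simp: pito_cap_def)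

lemma capto_Loc:
  assumes "cap y (Loc u t) \<noteq> 0"
  shows "(\<exists>i. y = Agent i \<and> i < M \<and> u = sv i \<and> t = st i) \<or>
         (\<exists>v t'. y = Aux v t' \<and> t = Suc t' \<and> v \<in> V \<and> u \<in> V \<and> t' < (K - 1) * T \<and> ((v, u) \<in> E \<or> u = v))"
  using assms by (cases y) (auto simp: pito_cap_def split: if_splits)

lemma capfrom_Aux:
  assumes "cap (Aux u t) y \<noteq> 0"
  shows "(\<exists>v. y = Loc v (Suc t) \<and> u \<in> V \<and> v \<in> V \<and> t < (K - 1) * T \<and> ((u, v) \<in> E \<or> v = u)) \<or>
         (\<exists>j k. y = Slot j k \<and> j < N \<and> k < K \<and> u = g j \<and> t = k * T)"
  using assms by (cases y) (auto simp: pito_cap_def split: if_splits)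

context
  fixes h assumes fl: "flow h"
begin

lemma hcap: "h x y \<le> cap x y"
  using fl unfolding pito_flow_def by auto

lemma hcons: "x \<in> S \<Longrightarrow> x \<noteq> Src \<Longrightarrow> x \<noteq> Snk \<Longrightarrow> (\<Sum>y\<in>S. h y x) = (\<Sum>y\<in>S. h x y)"
  using fl unfolding pito_flow_def by auto

lemma hzero: "cap x y = 0 \<Longrightarrow> h x y = 0"
  using hcap[of x y] by simp

lemma hnz: "h x y \<noteq> 0 \<Longrightarrow> cap x y \<noteq> 0"
  using hzero by metis

lemma out_Loc: "Loc u t \<in> S \<Longrightarrow> (\<Sum>y\<in>S. h (Loc u t) y) = h (Loc u t) (Aux u t)"
  apply (rule sum_single[OF finS])
   apply (auto simp: mem_S)[1]
  apply (intro ballI impI hzero)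
  subgoal for y by (cases y) (auto simp: pito_cap_def)
  done

lemma in_Aux: "Aux u t \<in> S \<Longrightarrow> (\<Sum>y\<in>S. h y (Aux u t)) = h (Loc u t) (Aux u t)"
  apply (rule sum_single[OF finS])
   apply (auto simp: mem_S)[1]
  apply (intro ballI impI hzero)
  subgoal for y by (cases y) (auto simp: pito_cap_def)
  done

lemma in_Agent: "i < M \<Longrightarrow> (\<Sum>y\<in>S. h y (Agent i)) = h Src (Agent i)"
  apply (rule sum_single[OF finS])
   apply (auto simp: mem_S)[1]
  apply (intro ballI impI hzero)
  subgoal for y by (cases y) (auto simp: pito_cap_def)
  done

lemma out_Agent: "i < M \<Longrightarrow> (\<Sum>y\<in>S. h (Agent i) y) = h (Agent i) (Loc (sv i) (st i))"
  apply (rule sum_single[OF finS])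
  using svV apply (auto simp: mem_S)[1]
  apply (intro ballI impI hzero)
  subgoal for y by (cases y) (auto simp: pito_cap_def)
  done

lemma agent_eq: "i < M \<Longrightarrow> h (Agent i) (Loc (sv i) (st i)) = h Src (Agent i)"
  using hcons[of "Agent i"] in_Agent out_Agent by (simp add: mem_S)

lemma in_Loc: "Loc u t \<in> S \<Longrightarrow> (\<Sum>y\<in>S. h y (Loc u t)) = h (Loc u t) (Aux u t)"
  using hcons[of "Loc u t"] out_Loc by simp

lemma out_Aux: "Aux u t \<in> S \<Longrightarrow> (\<Sum>y\<in>S. h (Aux u t) y) = h (Loc u t) (Aux u t)"
  using hcons[of "Aux u t"] in_Aux by simp

lemma LA_le1: "h (Loc u t) (Aux u t) \<le> 1"
  using hcap[of "Loc u t" "Aux u t"] cap_le1[of "Loc u t" "Aux u t"] by simp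

lemma U1: assumes "h y1 (Loc u t) \<noteq> 0" "h y2 (Loc u t) \<noteq> 0" "y1 \<noteq> y2" shows False
proof -
  have S: "y1 \<in> S" "y2 \<in> S" "Loc u t \<in> S" using cap_nodes hnz assms by blast+
  have "h y1 (Loc u t) + h y2 (Loc u t) \<le> 1"
    using sum_le2[OF finS S(1,2) assms(3), of "\<lambda>y. h y (Loc u t)"] in_Loc[OF S(3)] LA_le1[of u t] by simp
  thus False using assms by simp
qed

lemma U2: assumes "h (Aux u t) y1 \<noteq> 0" "h (Aux u t) y2 \<noteq> 0" "y1 \<noteq> y2" shows False
proof -
  have S: "y1 \<in> S" "y2 \<in> S" "Aux u t \<in> S" using cap_nodes hnz assms by blast+
  have "h (Aux u t) y1 + h (Aux u t) y2 \<le> 1"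
    using sum_le2[OF finS S(1,2) assms(3), of "\<lambda>y. h (Aux u t) y"] out_Aux[OF S(3)] LA_le1[of u t] by simp
  thus False using assms by simp
qed

lemma in_pos: "h y (Loc u t) \<noteq> 0 \<Longrightarrow> h (Loc u t) (Aux u t) = 1"
proof -
  assume a: "h y (Loc u t) \<noteq> 0"
  have S: "y \<in> S" "Loc u t \<in> S" using cap_nodes hnz a by blast+
  have "h y (Loc u t) \<le> (\<Sum>y\<in>S. h y (Loc u t))" by (rule member_le_sum[OF S(1) _ finS]) simp
  thus ?thesis using a in_Loc[OF S(2)] LA_le1[of u t] by simp
qed

lemma out_pos: "h (Aux u t) y \<noteq> 0 \<Longrightarrow> h (Loc u t) (Aux u t) = 1"
proof -
  assume a: "h (Aux u t) y \<noteq> 0"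
  have S: "y \<in> S" "Aux u t \<in> S" using cap_nodes hnz a by blast+
  have "h (Aux u t) y \<le> (\<Sum>y\<in>S. h (Aux u t) y)" by (rule member_le_sum[OF S(1) _ finS]) simp
  thus ?thesis using a out_Aux[OF S(2)] LA_le1[of u t] by simp
qed

lemma in_ex: assumes "h (Loc u t) (Aux u t) = 1" shows "\<exists>y. h y (Loc u t) \<noteq> 0"
proof -
  have L: "Loc u t \<in> S" using cap_nodes[OF hnz[of "Loc u t" "Aux u t"]] assms by simp
  have "(\<Sum>y\<in>S. h y (Loc u t)) \<noteq> 0" using in_Loc[OF L] assms by simp
  thus ?thesis using sum_pos_ex by blast
qed

lemma out_ex: assumes "h (Loc u t) (Aux u t) = 1" shows "\<exists>y. h (Aux u t) y \<noteq> 0"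
proof -
  have L: "Aux u t \<in> S" using cap_nodes[OF hnz[of "Loc u t" "Aux u t"]] assms by simp
  have "(\<Sum>y\<in>S. h (Aux u t) y) \<noteq> 0" using out_Aux[OF L] assms by simp
  thus ?thesis using sum_pos_ex by blast
qed

lemma nz_one: assumes "h x y \<noteq> 0" "\<not> (\<exists>j k. x = Slot j k \<and> (\<exists>k'. y = Slot j k'))" shows "h x y = 1"
  using hcap[of x y] cap_le1[OF assms(2)] assms(1) by linarith

end
end


primrec walk :: "('v \<Rightarrow> nat \<Rightarrow> 'v) \<Rightarrow> 'v \<Rightarrow> nat \<Rightarrow> nat \<Rightarrow> 'v" where
  "walk nx v0 t0 0 = v0"
| "walk nx v0 t0 (Suc n) = nx (walk nx v0 t0 n) (t0 + n)"

locale gflow = pctx +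
  fixes h
  assumes fl: "pito_flow V E N g M sv st T K h"
    and swapfree: "\<And>a b t. a \<noteq> b \<Longrightarrow> h (Aux a t) (Loc b (Suc t)) = 1 \<Longrightarrow> h (Aux b t) (Loc a (Suc t)) = 1 \<Longrightarrow> False"
begin

definition "nxt u t = (SOME v. h (Aux u t) (Loc v (Suc t)) = 1)"
definition "pth i t = walk nxt (sv i) (st i) (t - st i)"
definition "arr i t \<longleftrightarrow> (\<exists>j k. h (Aux (pth i t) t) (Slot j k) \<noteq> 0)"
definition "act i \<longleftrightarrow> i < M \<and> h Src (Agent i) = 1"
definition "ta i = (LEAST t. st i \<le> t \<and> arr i t)"
definition "asg i = (if act i then Some (SOME j. \<exists>k. h (Aux (pth i (ta i)) (ta i)) (Slot j k) \<noteq> 0) else None)"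
definition "kk i = ta i div T"

lemma pth_st: "pth i (st i) = sv i"
  by (simp add: pth_def)

lemma pth_Suc: "st i \<le> t \<Longrightarrow> pth i (Suc t) = nxt (pth i t) t"
  by (simp add: pth_def Suc_diff_le)

lemma step_lemma:
  assumes "h (Loc u t) (Aux u t) = 1" "\<not> (\<exists>j k. h (Aux u t) (Slot j k) \<noteq> 0)"
  shows "h (Aux u t) (Loc (nxt u t) (Suc t)) = 1"
proof -
  obtain y where y: "h (Aux u t) y \<noteq> 0" using out_ex[OF fl assms(1)] by blast
  then have c: "cap (Aux u t) y \<noteq> 0" using hnz[OF fl] by blast
  from capfrom_Aux[OF c] assms(2) y obtain v where v: "y = Loc v (Suc t)" by blast
  have "h (Aux u t) (Loc v (Suc t)) = 1" using nz_one[OF fl] y v by simp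
  then have "\<exists>v. h (Aux u t) (Loc v (Suc t)) = 1" by blast
  thus ?thesis unfolding nxt_def by (rule someI_ex)
qed

lemma run:
  assumes a: "act i"
  shows "(\<forall>t. st i \<le> t \<and> t < st i + n \<longrightarrow> \<not> arr i t) \<Longrightarrow>
         h (Loc (pth i (st i + n)) (st i + n)) (Aux (pth i (st i + n)) (st i + n)) = 1"
proof (induction n)
  case 0
  have "h (Agent i) (Loc (sv i) (st i)) = 1" using agent_eq[OF fl] a by (simp add: act_def)
  then show ?case using in_pos[OF fl, of "Agent i"] by (simp add: pth_st)
next
  case (Suc n)
  let ?t = "st i + n"
  have 1: "h (Loc (pth i ?t) ?t) (Aux (pth i ?t) ?t) = 1" using Suc by auto
  have 2: "\<not> arr i ?t" using Suc.prems by auto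
  have 3: "h (Aux (pth i ?t) ?t) (Loc (nxt (pth i ?t) ?t) (Suc ?t)) = 1"
    by (rule step_lemma[OF 1]) (use 2 in \<open>simp add: arr_def\<close>)
  have "pth i (st i + Suc n) = nxt (pth i ?t) ?t" using pth_Suc[of i ?t] by simp
  moreover have "h (Loc (nxt (pth i ?t) ?t) (Suc ?t)) (Aux (nxt (pth i ?t) ?t) (Suc ?t)) = 1"
    by (rule in_pos[OF fl, of "Aux (pth i ?t) ?t"]) (use 3 in simp)
  ultimately show ?case by simp
qed

lemma arr_ex: assumes a: "act i" shows "\<exists>t. st i \<le> t \<and> arr i t"
proof (rule ccontr)
  assume "\<not> ?thesis"
  then have na: "\<forall>t. st i \<le> t \<and> t < st i + (Suc ((K - 1) * T) - st i) \<longrightarrow> \<not> arr i t" by blast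
  have sti: "st i \<le> (K - 1) * T" using a svV by (simp add: act_def)
  define t where "t = st i + (Suc ((K - 1) * T) - st i)"
  have tt: "t = Suc ((K - 1) * T)" using sti by (simp add: t_def)
  have "h (Loc (pth i t) t) (Aux (pth i t) t) = 1" using run[OF a na] by (simp add: t_def)
  then have "cap (Loc (pth i t) t) (Aux (pth i t) t) \<noteq> 0" using hnz[OF fl] by (metis one_neq_zero)
  then have "Loc (pth i t) t \<in> S" using cap_nodes by blast
  then show False using tt by (simp add: mem_S)
qed

lemma ta_props: assumes "act i" shows "st i \<le> ta i" "arr i (ta i)"
  using LeastI_ex[OF arr_ex[OF assms]] unfolding ta_def by auto

lemma ta_min: "st i \<le> t \<Longrightarrow> t < ta i \<Longrightarrow> \<not> arr i t"
  unfolding ta_def using not_less_Least by blast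

lemma on_path: assumes "act i" "st i \<le> t" "t \<le> ta i"
  shows "h (Loc (pth i t) t) (Aux (pth i t) t) = 1"
proof -
  have "\<forall>t'. st i \<le> t' \<and> t' < st i + (t - st i) \<longrightarrow> \<not> arr i t'" using ta_min assms by auto
  from run[OF assms(1) this] show ?thesis using assms by simp
qed

lemma step_edge: assumes "act i" "st i \<le> t" "t < ta i"
  shows "h (Aux (pth i t) t) (Loc (pth i (Suc t)) (Suc t)) = 1"
  using step_lemma[OF on_path[OF assms(1,2)]] ta_min[OF assms(2,3)] assms pth_Suc[OF assms(2)]
  by (simp add: arr_def)

lemma arrival: assumes a: "act i"
  shows "\<exists>j. asg i = Some j \<and> j < N \<and> kk i < K \<and> ta i = kk i * T \<and> pth i (ta i) = g j
      \<and> h (Aux (g j) (kk i * T)) (Slot j (kk i)) = 1"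
proof -
  have "\<exists>j k. h (Aux (pth i (ta i)) (ta i)) (Slot j k) \<noteq> 0" using ta_props(2)[OF a] by (simp add: arr_def)
  then have "\<exists>j. \<exists>k. h (Aux (pth i (ta i)) (ta i)) (Slot j k) \<noteq> 0" by blast
  then have "\<exists>k. h (Aux (pth i (ta i)) (ta i)) (Slot (SOME j. \<exists>k. h (Aux (pth i (ta i)) (ta i)) (Slot j k) \<noteq> 0) k) \<noteq> 0"
    by (rule someI_ex)
  then obtain k where k: "h (Aux (pth i (ta i)) (ta i)) (Slot (the (asg i)) k) \<noteq> 0"
    using a by (auto simp: asg_def)
  then have c: "cap (Aux (pth i (ta i)) (ta i)) (Slot (the (asg i)) k) \<noteq> 0" using hnz[OF fl] by blast
  from capfrom_Aux[OF c] have cc: "the (asg i) < N" "k < K" "pth i (ta i) = g (the (asg i))" "ta i = k * T"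
    by auto
  have kk: "kk i = k" using cc(4) Tpos by (simp add: kk_def)
  have "h (Aux (pth i (ta i)) (ta i)) (Slot (the (asg i)) k) = 1" using nz_one[OF fl k] by simp
  then show ?thesis using cc kk a by (auto simp: asg_def)
qed

lemma pred:
  assumes "act i" "st i \<le> t" "t \<le> ta i"
  shows "(t = st i \<and> h (Agent i) (Loc (pth i t) t) = 1) \<or>
         (st i < t \<and> h (Aux (pth i (t - 1)) (t - 1)) (Loc (pth i t) t) = 1)"
proof (cases "t = st i")
  case True
  then show ?thesis using agent_eq[OF fl] assms by (simp add: act_def pth_st)
next
  case False
  define t0 where "t0 = t - 1"
  have t0: "t = Suc t0" "st i \<le> t0" using False assms(2) by (auto simp: t0_def)
  have "h (Aux (pth i t0) t0) (Loc (pth i (Suc t0)) (Suc t0)) = 1"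
    using step_edge[OF assms(1) t0(2)] t0 assms(3) by simp
  then show ?thesis using t0 by simp
qed

lemma coll:
  "act i \<Longrightarrow> act i' \<Longrightarrow> i \<noteq> i' \<Longrightarrow> st i \<le> t \<Longrightarrow> t \<le> ta i \<Longrightarrow> st i' \<le> t \<Longrightarrow> t \<le> ta i'
   \<Longrightarrow> pth i t \<noteq> pth i' t"
proof (induction t arbitrary: i i' rule: less_induct)
  case (less t)
  show ?case
  proof
    assume eq: "pth i t = pth i' t"
    note p1 = pred[OF less.prems(1,4,5)] and p2 = pred[OF less.prems(2,6,7)]
    show False
    proof (cases "t = st i")
      case True
      then have A: "h (Agent i) (Loc (pth i t) t) \<noteq> 0" using p1 by auto
      show False
      proof (cases "t = st i'")
        case True
        then have "h (Agent i') (Loc (pth i t) t) \<noteq> 0" using p2 eq by auto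
        then show False using U1[OF fl A] less.prems(3) by blast
      next
        case False
        then have "h (Aux (pth i' (t - 1)) (t - 1)) (Loc (pth i t) t) \<noteq> 0" using p2 eq by auto
        then show False using U1[OF fl A] by blast
      qed
    next
      case False
      then have A: "h (Aux (pth i (t - 1)) (t - 1)) (Loc (pth i t) t) \<noteq> 0" "st i < t" using p1 by auto
      show False
      proof (cases "t = st i'")
        case True
        then have "h (Agent i') (Loc (pth i t) t) \<noteq> 0" using p2 eq by auto
        then show False using U1[OF fl A(1)] by blast
      next
        case False
        then have B: "h (Aux (pth i' (t - 1)) (t - 1)) (Loc (pth i t) t) \<noteq> 0" "st i' < t" using p2 eq by auto
        have "pth i (t - 1) \<noteq> pth i' (t - 1)"
          using less.IH[of "t - 1" i i'] less.prems A(2) B(2) by auto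
        then show False using U1[OF fl A(1) B(1)] by blast
      qed
    qed
  qed
qed


lemma back_tr:
  "h (Loc u t) (Aux u t) = 1 \<Longrightarrow> \<exists>i. act i \<and> st i \<le> t \<and> t \<le> ta i \<and> pth i t = u"
proof (induction t arbitrary: u rule: less_induct)
  case (less t)
  obtain y where y: "h y (Loc u t) \<noteq> 0" using in_ex[OF fl less.prems] by blast
  have c: "cap y (Loc u t) \<noteq> 0" using hnz[OF fl y] .
  from capto_Loc[OF c] show ?case
  proof
    assume "\<exists>i. y = Agent i \<and> i < M \<and> u = sv i \<and> t = st i"
    then obtain i where i: "y = Agent i" "i < M" "u = sv i" "t = st i" by blast
    have "h Src (Agent i) \<noteq> 0" using agent_eq[OF fl i(2)] y i by simp
    then have "h Src (Agent i) = 1" using nz_one[OF fl] by simp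
    then have a: "act i" using i by (simp add: act_def)
    show ?thesis using a ta_props(1)[OF a] i pth_st by auto
  next
    assume "\<exists>v t'. y = Aux v t' \<and> t = Suc t' \<and> v \<in> V \<and> u \<in> V \<and> t' < (K - 1) * T \<and> ((v, u) \<in> E \<or> u = v)"
    then obtain v t' where vt: "y = Aux v t'" "t = Suc t'" by blast
    have y': "h (Aux v t') (Loc u t) \<noteq> 0" using y vt by simp
    have "h (Loc v t') (Aux v t') = 1" using out_pos[OF fl y'] .
    from less.IH[OF _ this] vt obtain i where i: "act i" "st i \<le> t'" "t' \<le> ta i" "pth i t' = v" by auto
    have lt: "t' < ta i"
    proof (rule ccontr)
      assume "\<not> t' < ta i"
      then have "t' = ta i" using i by simp
      then obtain j k where "h (Aux v t') (Slot j k) \<noteq> 0" using ta_props(2)[OF i(1)] i(4) by (auto simp: arr_def)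
      then show False using U2[OF fl y'] by blast
    qed
    have "h (Aux v t') (Loc (pth i t) t) = 1" using step_edge[OF i(1,2) lt] i(4) vt by simp
    then have "pth i t = u" using U2[OF fl y', of "Loc (pth i t) t"] by (cases "pth i t = u") auto
    then show ?thesis using i lt vt by auto
  qed
qed

lemma slot_back:
  assumes "h (Aux (g j) (k * T)) (Slot j k) \<noteq> 0" "j < N"
  shows "\<exists>i<M. asg i = Some j \<and> kk i = k"
proof -
  have "h (Loc (g j) (k * T)) (Aux (g j) (k * T)) = 1" using out_pos[OF fl assms(1)] .
  from back_tr[OF this] obtain i where i: "act i" "st i \<le> k * T" "k * T \<le> ta i" "pth i (k * T) = g j" by blast
  have eq: "k * T = ta i"
  proof (rule ccontr)
    assume "k * T \<noteq> ta i"
    then have "k * T < ta i" using i by simp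
    then have "h (Aux (g j) (k * T)) (Loc (pth i (Suc (k * T))) (Suc (k * T))) = 1"
      using step_edge[OF i(1,2)] i(4) by simp
    then show False using U2[OF fl assms(1)] by (metis one_neq_zero pnode.distinct)
  qed
  obtain j' where j': "asg i = Some j'" "j' < N" "kk i < K" "ta i = kk i * T" "pth i (ta i) = g j'"
    using arrival[OF i(1)] by blast
  have "g j' = g j" using j' i eq by simp
  then have "j' = j" using ginj j'(2) assms(2) by (auto dest: inj_onD)
  moreover have "kk i = k" using eq j'(4) Tpos by simp
  moreover have "i < M" using i(1) by (simp add: act_def)
  ultimately show ?thesis using j' by blast
qed

lemma present_iff: "present st asg kk T i t \<longleftrightarrow> act i \<and> st i \<le> t \<and> t \<le> ta i"
proof -
  have "act i \<Longrightarrow> kk i * T = ta i" using arrival by fastforce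
  then show ?thesis unfolding present_def by (auto simp: asg_def)
qed

lemma solution: "tapf_solution E N g M sv st T K asg kk pth"
  unfolding tapf_solution_def
proof (intro conjI allI impI)
  fix i j assume i: "i < M" and s: "asg i = Some j"
  then have a: "act i" by (auto simp: asg_def split: if_splits)
  obtain j' where j': "asg i = Some j'" "j' < N" "kk i < K" "ta i = kk i * T" "pth i (ta i) = g j'"
    using arrival[OF a] by blast
  have jj: "j' = j" using j' s by simp
  show "j < N" using j' jj by simp
  show "kk i < K" using j' by simp
  show "st i \<le> kk i * T" using ta_props(1)[OF a] j' by simp
  show "pth i (st i) = sv i" by (rule pth_st)
  show "pth i (kk i * T) = g j" using j' jj by simp
  {
    fix t assume t: "st i \<le> t \<and> t < kk i * T"
    then have "h (Aux (pth i t) t) (Loc (pth i (Suc t)) (Suc t)) = 1" using step_edge[OF a] j' by simp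
    then have "cap (Aux (pth i t) t) (Loc (pth i (Suc t)) (Suc t)) \<noteq> 0" using hnz[OF fl] by (metis one_neq_zero)
    from capfrom_Aux[OF this] show "(pth i t, pth i (Suc t)) \<in> E \<or> pth i (Suc t) = pth i t" by auto
  }
next
  fix i i' assume i: "i < M" "i' < M" "i \<noteq> i'" "asg i \<noteq> None" "asg i = asg i'"
  show "kk i \<noteq> kk i'"
  proof
    assume k: "kk i = kk i'"
    have a: "act i" "act i'" using i by (auto simp: asg_def split: if_splits)
    obtain j where j: "asg i = Some j" "j < N" "kk i < K" "ta i = kk i * T" "pth i (ta i) = g j"
      using arrival[OF a(1)] by blast
    obtain j' where j': "asg i' = Some j'" "j' < N" "kk i' < K" "ta i' = kk i' * T" "pth i' (ta i') = g j'"
      using arrival[OF a(2)] by blast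
    have "pth i (ta i) \<noteq> pth i' (ta i)"
      using coll[OF a i(3) ta_props(1)[OF a(1)] order_refl] ta_props(1)[OF a(2)] j j' k by simp
    then show False using j j' k i(5) by simp
  qed
next
  fix i i' t assume "i < M" "i' < M" "i \<noteq> i'" "present st asg kk T i t" "present st asg kk T i' t"
  then show "pth i t \<noteq> pth i' t" using coll by (simp add: present_iff)
next
  fix i i' t assume i: "i < M" "i' < M" "i \<noteq> i'" "present st asg kk T i t" "present st asg kk T i (Suc t)"
    "present st asg kk T i' t" "present st asg kk T i' (Suc t)"
  show "\<not> (pth i t = pth i' (Suc t) \<and> pth i (Suc t) = pth i' t)"
  proof
    assume sw: "pth i t = pth i' (Suc t) \<and> pth i (Suc t) = pth i' t"
    have p: "act i" "st i \<le> t" "t < ta i" "act i'" "st i' \<le> t" "t < ta i'"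
      using i by (auto simp: present_iff)
    show False
    proof (cases "pth i t = pth i' t")
      case True
      then show False using coll[OF p(1,4) i(3) p(2)] p by simp
    next
      case False
      have 1: "h (Aux (pth i t) t) (Loc (pth i' t) (Suc t)) = 1" using step_edge[OF p(1,2,3)] sw by simp
      have 2: "h (Aux (pth i' t) t) (Loc (pth i t) (Suc t)) = 1" using step_edge[OF p(4,5,6)] sw by simp
      show False using swapfree[OF False 1 2] .
    qed
  qed
qed

lemma occ_iff:
  assumes "j < N" "k < K"
  shows "(j, k) \<in> occupied_slots N M K asg kk \<longleftrightarrow> h (Aux (g j) (k * T)) (Slot j k) = 1"
proof
  assume "(j, k) \<in> occupied_slots N M K asg kk"
  then obtain i where i: "i < M" "asg i = Some j" "kk i = k" by (auto simp: occupied_slots_def)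
  then have a: "act i" by (auto simp: asg_def split: if_splits)
  from arrival[OF a] i show "h (Aux (g j) (k * T)) (Slot j k) = 1" by auto
next
  assume "h (Aux (g j) (k * T)) (Slot j k) = 1"
  then obtain i where "i < M" "asg i = Some j" "kk i = k" using slot_back assms by (metis one_neq_zero)
  then show "(j, k) \<in> occupied_slots N M K asg kk" using assms by (auto simp: occupied_slots_def)
qed

lemma asg_iff: "i < M \<Longrightarrow> asg i \<noteq> None \<longleftrightarrow> h Src (Agent i) = 1"
  by (simp add: asg_def act_def)

end


lemma walk_deg:
  fixes w :: "nat \<Rightarrow> 'a"
  assumes inj: "inj_on w {..n}" and x: "x \<noteq> w 0" "x \<noteq> w n"
  shows "card {y. (y, x) \<in> {(w m, w (Suc m)) | m. m < n}} = card {y. (x, y) \<in> {(w m, w (Suc m)) | m. m < n}}"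
proof (cases "x \<in> w ` {..n}")
  case True
  then obtain m where m: "m \<le> n" "x = w m" by auto
  have m0: "m \<noteq> 0" "m \<noteq> n"
  proof -
    show "m \<noteq> 0" proof assume "m = 0" then show False using m x by simp qed
    show "m \<noteq> n" proof assume "m = n" then show False using m x by simp qed
  qed
  have "{y. (y, x) \<in> {(w m, w (Suc m)) | m. m < n}} = {w (m - 1)}"
  proof (intro set_eqI iffI)
    fix y assume "y \<in> {y. (y, x) \<in> {(w m, w (Suc m)) | m. m < n}}"
    then obtain m' where m': "m' < n" "y = w m'" "x = w (Suc m')" by auto
    have "Suc m' = m" using inj_onD[OF inj, of "Suc m'" m] m m' by auto
    then show "y \<in> {w (m - 1)}" using m' by auto
  next
    fix y assume "y \<in> {w (m - 1)}"
    then have "y = w (m - 1)" "x = w (Suc (m - 1))" "m - 1 < n" using m m0 by auto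
    then show "y \<in> {y. (y, x) \<in> {(w m, w (Suc m)) | m. m < n}}" by blast
  qed
  moreover have "{y. (x, y) \<in> {(w m, w (Suc m)) | m. m < n}} = {w (Suc m)}"
  proof (intro set_eqI iffI)
    fix y assume "y \<in> {y. (x, y) \<in> {(w m, w (Suc m)) | m. m < n}}"
    then obtain m' where m': "m' < n" "x = w m'" "y = w (Suc m')" by auto
    have "m' = m" using inj_onD[OF inj, of m' m] m m' by auto
    then show "y \<in> {w (Suc m)}" using m' by auto
  next
    fix y assume "y \<in> {w (Suc m)}"
    then have "y = w (Suc m)" "x = w m" "m < n" using m m0 by auto
    then show "y \<in> {y. (x, y) \<in> {(w m, w (Suc m)) | m. m < n}}" by blast
  qed
  ultimately show ?thesis by simp
next
  case False
  have e1: "{y. (y, x) \<in> {(w m, w (Suc m)) | m. m < n}} = {}"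
    using False by auto
  have e2: "{y. (x, y) \<in> {(w m, w (Suc m)) | m. m < n}} = {}"
    using False by auto
  show ?thesis unfolding e1 e2 by (rule refl)
qed

lemma sum_ind_card:
  assumes "finite S"
  shows "(\<Sum>y\<in>S. if P y then 1 else (0::nat)) = card {y\<in>S. P y}"
proof -
  have "(\<Sum>y\<in>S. if P y then 1 else (0::nat)) = (\<Sum>y\<in>{y\<in>S. P y}. 1)"
    using sum.inter_filter[OF assms, of "\<lambda>_. (1::nat)" P] by simp
  then show ?thesis by simp
qed

definition tr :: "'a \<Rightarrow> 'a \<Rightarrow> 'a \<Rightarrow> 'a" where
  "tr a b y = (if y = a then b else if y = b then a else y)"

lemma sum_tr:
  fixes F :: "'a \<Rightarrow> nat"
  assumes "a \<in> S" "b \<in> S"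
  shows "(\<Sum>y\<in>S. F (tr a b y)) = sum F S"
  by (rule sum.reindex_bij_witness[where i="tr a b" and j="tr a b"]) (use assms in \<open>auto simp: tr_def\<close>)


locale sol = pctx +
  fixes asg kk \<pi>
  assumes sol: "tapf_solution E N g M sv st T K asg kk \<pi>"
begin

lemma sol1: assumes "i < M" "asg i = Some j"
  shows "j < N" "kk i < K" "st i \<le> kk i * T" "\<pi> i (st i) = sv i" "\<pi> i (kk i * T) = g j"
    "\<And>t. st i \<le> t \<Longrightarrow> t < kk i * T \<Longrightarrow> (\<pi> i t, \<pi> i (Suc t)) \<in> E \<or> \<pi> i (Suc t) = \<pi> i t"
  using sol assms unfolding tapf_solution_def by blast+

lemma sol2: "i < M \<Longrightarrow> i' < M \<Longrightarrow> asg i \<noteq> None \<Longrightarrow> asg i = asg i' \<Longrightarrow> kk i = kk i' \<Longrightarrow> i = i'"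
  using sol unfolding tapf_solution_def by blast

lemma sol3: "i < M \<Longrightarrow> i' < M \<Longrightarrow> present st asg kk T i t \<Longrightarrow> present st asg kk T i' t \<Longrightarrow> \<pi> i t = \<pi> i' t \<Longrightarrow> i = i'"
  using sol unfolding tapf_solution_def by blast

definition "A = {i. i < M \<and> asg i \<noteq> None}"
definition "L i = kk i * T - st i"
definition "w i m = (if m = 0 then Src else if m = 1 then Agent i else if m < 2 * L i + 4 then
   (if even m then Loc (\<pi> i (st i + (m - 2) div 2)) (st i + (m - 2) div 2)
    else Aux (\<pi> i (st i + (m - 2) div 2)) (st i + (m - 2) div 2))
   else if m = 2 * L i + 4 then Slot (the (asg i)) (kk i) else Snk)"
definition "Ed i = {(w i m, w i (Suc m)) | m. m < 2 * L i + 5}"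
definition "G x y = (\<Sum>i\<in>A. if (x, y) \<in> Ed i then 1 else (0::nat))"

lemma finA: "finite A" unfolding A_def by auto

lemma w0: "w i 0 = Src" and w1: "w i (Suc 0) = Agent i" by (simp_all add: w_def)
lemma wL: "d \<le> L i \<Longrightarrow> w i (2 + 2 * d) = Loc (\<pi> i (st i + d)) (st i + d)"
  by (simp add: w_def)
lemma wA: "d \<le> L i \<Longrightarrow> w i (3 + 2 * d) = Aux (\<pi> i (st i + d)) (st i + d)"
proof -
  assume "d \<le> L i"
  moreover have "(3 + 2 * d - 2) div 2 = d" by simp
  ultimately show ?thesis by (simp add: w_def)
qed
lemma wS: "w i (2 * L i + 4) = Slot (the (asg i)) (kk i)" by (simp add: w_def)
lemma wN: "w i (2 * L i + 5) = Snk" by (simp add: w_def)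

lemma m_cases: "(m::nat) < 2 * l + 5 \<Longrightarrow> m = 0 \<or> m = 1 \<or> (\<exists>d\<le>l. m = 2 + 2 * d) \<or> (\<exists>d\<le>l. m = 3 + 2 * d) \<or> m = 2 * l + 4"
  by presburger

definition "rank i x = (case x of Src \<Rightarrow> 0 | Agent _ \<Rightarrow> 1 | Loc _ s \<Rightarrow> 2 + 2 * (s - st i)
   | Aux _ s \<Rightarrow> 3 + 2 * (s - st i) | Slot _ _ \<Rightarrow> 2 * L i + 4 | Snk \<Rightarrow> 2 * L i + 5)"

lemma rank_w: assumes "m \<le> 2 * L i + 5" shows "rank i (w i m) = m"
proof (cases "m = 2 * L i + 5")
  case True then show ?thesis using wN by (simp add: rank_def)
next
  case False
  then have "m < 2 * L i + 5" using assms by simp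
  from m_cases[OF this] show ?thesis
  proof (elim disjE exE conjE)
    fix d assume d: "d \<le> L i" "m = 2 + 2 * d"
    show ?thesis unfolding d(2) wL[OF d(1)] by (simp add: rank_def)
  next
    fix d assume d: "d \<le> L i" "m = 3 + 2 * d"
    show ?thesis unfolding d(2) wA[OF d(1)] by (simp add: rank_def)
  qed (auto simp: rank_def w0 w1 wS)
qed

lemma inj_w: "inj_on (w i) {..2 * L i + 5}"
  by (rule inj_on_inverseI[where g = "rank i"]) (simp add: rank_w)

lemma Aprops: assumes "i \<in> A"
  shows "i < M" "asg i = Some (the (asg i))" "the (asg i) < N" "kk i < K" "st i + L i = kk i * T"
    "\<pi> i (st i) = sv i" "\<pi> i (kk i * T) = g (the (asg i))" "kk i * T \<le> (K - 1) * T"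
proof -
  show i: "i < M" "asg i = Some (the (asg i))" using assms by (auto simp: A_def)
  note s = sol1[OF i]
  show "the (asg i) < N" "kk i < K" "\<pi> i (st i) = sv i" "\<pi> i (kk i * T) = g (the (asg i))" using s by auto
  show "st i + L i = kk i * T" using s(3) by (simp add: L_def)
  show "kk i * T \<le> (K - 1) * T" using s(2) by (intro mult_le_mono1) simp
qed

lemma steps: "i \<in> A \<Longrightarrow> st i \<le> t \<Longrightarrow> t < kk i * T \<Longrightarrow> (\<pi> i t, \<pi> i (Suc t)) \<in> E \<or> \<pi> i (Suc t) = \<pi> i t"
  using sol1(6)[OF Aprops(1,2)] by blast

lemma piV: assumes "i \<in> A" "st i \<le> s" "s \<le> kk i * T" shows "\<pi> i s \<in> V"
  using assms(2,3)
proof (induction s rule: dec_induct)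
  case base
  then show ?case using Aprops(1,6)[OF assms(1)] svV by simp
next
  case (step n)
  then have "(\<pi> i n, \<pi> i (Suc n)) \<in> E \<or> \<pi> i (Suc n) = \<pi> i n" using steps[OF assms(1)] by simp
  then show ?case using step EV by auto
qed

lemma cap_w: assumes i: "i \<in> A" and m: "m < 2 * L i + 5"
  shows "cap (w i m) (w i (Suc m)) \<noteq> 0"
proof -
  note P = Aprops[OF i]
  from m_cases[OF m] show ?thesis
  proof (elim disjE exE conjE)
    assume "m = 0" then show ?thesis using P by (simp add: w0 w1 pito_cap_def)
  next
    assume m1: "m = 1"
    have "w i (Suc (Suc 0)) = Loc (\<pi> i (st i)) (st i)" by (simp add: w_def)
    then show ?thesis using m1 P by (simp add: w1 pito_cap_def)
  next
    fix d assume d: "d \<le> L i" "m = 2 + 2 * d"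
    have wm: "w i m = Loc (\<pi> i (st i + d)) (st i + d)" unfolding d(2) by (rule wL[OF d(1)])
    have e: "Suc m = 3 + 2 * d" using d(2) by simp
    have ws: "w i (Suc m) = Aux (\<pi> i (st i + d)) (st i + d)" unfolding e by (rule wA[OF d(1)])
    have "\<pi> i (st i + d) \<in> V" using piV[OF i] d P by simp
    moreover have "st i + d \<le> (K - 1) * T" using d P by linarith
    ultimately show ?thesis unfolding wm ws by (simp add: pito_cap_def)
  next
    fix d assume d: "d \<le> L i" "m = 3 + 2 * d"
    show ?thesis
    proof (cases "d = L i")
      case True
      have wm: "w i m = Aux (\<pi> i (st i + d)) (st i + d)" unfolding d(2) by (rule wA[OF d(1)])
      have e: "Suc m = 2 * L i + 4" using d(2) True by simp
      have ws: "w i (Suc m) = Slot (the (asg i)) (kk i)" unfolding e by (rule wS)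
      have "st i + d = kk i * T" using True P by simp
      then show ?thesis unfolding wm ws using P by (simp add: pito_cap_def)
    next
      case False
      then have d': "Suc d \<le> L i" using d by simp
      have e: "Suc m = 2 + 2 * Suc d" using d(2) by simp
      have ws: "w i (Suc m) = Loc (\<pi> i (st i + Suc d)) (st i + Suc d)" unfolding e by (rule wL[OF d'])
      have wm: "w i m = Aux (\<pi> i (st i + d)) (st i + d)" unfolding d(2) by (rule wA[OF d(1)])
      have lt: "st i + d < kk i * T" using d' P by linarith
      have "\<pi> i (st i + d) \<in> V" "\<pi> i (Suc (st i + d)) \<in> V" using piV[OF i] lt by auto
      moreover have "st i + d < (K - 1) * T" using lt P by linarith
      moreover have "(\<pi> i (st i + d), \<pi> i (Suc (st i + d))) \<in> E \<or> \<pi> i (Suc (st i + d)) = \<pi> i (st i + d)"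
        using steps[OF i _ lt] by simp
      ultimately show ?thesis unfolding wm ws by (auto simp: pito_cap_def)
    qed
  next
    assume m4: "m = 2 * L i + 4"
    have wm: "w i m = Slot (the (asg i)) (kk i)" unfolding m4 by (rule wS)
    have e: "Suc m = 2 * L i + 5" using m4 by simp
    have ws: "w i (Suc m) = Snk" unfolding e by (rule wN)
    show ?thesis unfolding wm ws using P by (simp add: pito_cap_def)
  qed
qed

lemma Ed_cap: "i \<in> A \<Longrightarrow> (x, y) \<in> Ed i \<Longrightarrow> cap x y \<noteq> 0"
  unfolding Ed_def using cap_w by blast

lemma Ed_S: "i \<in> A \<Longrightarrow> (x, y) \<in> Ed i \<Longrightarrow> x \<in> S \<and> y \<in> S"
  using Ed_cap cap_nodes by blast

lemma node_cases: assumes i: "i \<in> A" and m: "m < 2 * L i + 5"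
  shows "(w i m = Src \<and> w i (Suc m) = Agent i) \<or> w i m = Agent i \<or>
    (\<exists>s. present st asg kk T i s \<and> w i m \<in> {Loc (\<pi> i s) s, Aux (\<pi> i s) s}) \<or>
    w i m = Slot (the (asg i)) (kk i)"
proof -
  note P = Aprops[OF i]
  have pr: "\<And>d. d \<le> L i \<Longrightarrow> present st asg kk T i (st i + d)"
    using P by (auto simp: present_def)
  from m_cases[OF m] show ?thesis
  proof (elim disjE exE conjE)
    assume "m = 0" then show ?thesis by (simp add: w0 w1)
  next
    assume "m = 1" then show ?thesis by (simp add: w1)
  next
    fix d assume d: "d \<le> L i" "m = 2 + 2 * d"
    then show ?thesis using wL[OF d(1)] pr[OF d(1)] by auto
  next
    fix d assume d: "d \<le> L i" "m = 3 + 2 * d"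
    then show ?thesis using wA[OF d(1)] pr[OF d(1)] by auto
  next
    assume "m = 2 * L i + 4" then show ?thesis by (simp add: wS)
  qed
qed

lemma edge_unique:
  assumes i: "i \<in> A" "i' \<in> A" and e: "(x, y) \<in> Ed i" "(x, y) \<in> Ed i'"
  shows "i = i'"
proof -
  obtain m where m: "m < 2 * L i + 5" "x = w i m" "y = w i (Suc m)" using e(1) by (auto simp: Ed_def)
  obtain m' where m': "m' < 2 * L i' + 5" "x = w i' m'" "y = w i' (Suc m')" using e(2) by (auto simp: Ed_def)
  have M: "i < M" "i' < M" using i by (auto simp: A_def)
  note c1 = node_cases[OF i(1) m(1)] and c2 = node_cases[OF i(2) m'(1)]
  have "w i m = w i' m'" using m m' by simp
  from c1 show ?thesis
  proof (elim disjE exE conjE)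
    assume a: "w i m = Src" "w i (Suc m) = Agent i"
    from c2 a m m' show ?thesis by auto
  next
    assume a: "w i m = Agent i"
    from c2 a m m' show ?thesis by auto
  next
    fix s assume p: "present st asg kk T i s" and a: "w i m \<in> {Loc (\<pi> i s) s, Aux (\<pi> i s) s}"
    from c2 show ?thesis
    proof (elim disjE exE conjE)
      fix s' assume p': "present st asg kk T i' s'" and a': "w i' m' \<in> {Loc (\<pi> i' s') s', Aux (\<pi> i' s') s'}"
      have "s = s' \<and> \<pi> i s = \<pi> i' s'" using a a' m m' by auto
      then show ?thesis using sol3[OF M p] p' by auto
    qed (use a m m' in auto)
  next
    assume a: "w i m = Slot (the (asg i)) (kk i)"
    from c2 show ?thesis
    proof (elim disjE exE conjE)
      assume a': "w i' m' = Slot (the (asg i')) (kk i')"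
      have "the (asg i) = the (asg i')" "kk i = kk i'" using a a' m m' by auto
      then show ?thesis using sol2[OF M] Aprops(2)[OF i(1)] Aprops(2)[OF i(2)] by (metis option.distinct(1))
    qed (use a m m' in auto)
  qed
qed

lemma G_card: "G x y = card {i\<in>A. (x, y) \<in> Ed i}"
  unfolding G_def by (rule sum_ind_card[OF finA])

lemma G_cap: "G x y \<le> cap x y"
proof (cases "{i\<in>A. (x, y) \<in> Ed i} = {}")
  case True then show ?thesis unfolding G_card True by simp
next
  case False
  then obtain i where i: "i \<in> A" "(x, y) \<in> Ed i" by auto
  have "card {i\<in>A. (x, y) \<in> Ed i} \<le> Suc 0"
    using edge_unique by (subst card_le_Suc0_iff_eq) (auto intro: finite_subset[OF _ finA])
  moreover have "cap x y \<noteq> 0" using Ed_cap[OF i] .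
  ultimately show ?thesis by (simp add: G_card)
qed

lemma G_in: "(\<Sum>y\<in>S. G y x) = (\<Sum>i\<in>A. card {y. (y, x) \<in> Ed i})"
proof -
  have "(\<Sum>y\<in>S. G y x) = (\<Sum>i\<in>A. \<Sum>y\<in>S. if (y, x) \<in> Ed i then 1 else (0::nat))"
    unfolding G_def by (rule sum.swap)
  also have "\<dots> = (\<Sum>i\<in>A. card {y. (y, x) \<in> Ed i})"
  proof (rule sum.cong[OF refl])
    fix i assume i: "i \<in> A"
    have "{y \<in> S. (y, x) \<in> Ed i} = {y. (y, x) \<in> Ed i}" using Ed_S[OF i] by auto
    then show "(\<Sum>y\<in>S. if (y, x) \<in> Ed i then 1 else (0::nat)) = card {y. (y, x) \<in> Ed i}"
      using sum_ind_card[OF finS] by simp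
  qed
  finally show ?thesis .
qed

lemma G_out: "(\<Sum>y\<in>S. G x y) = (\<Sum>i\<in>A. card {y. (x, y) \<in> Ed i})"
proof -
  have "(\<Sum>y\<in>S. G x y) = (\<Sum>i\<in>A. \<Sum>y\<in>S. if (x, y) \<in> Ed i then 1 else (0::nat))"
    unfolding G_def by (rule sum.swap)
  also have "\<dots> = (\<Sum>i\<in>A. card {y. (x, y) \<in> Ed i})"
  proof (rule sum.cong[OF refl])
    fix i assume i: "i \<in> A"
    have "{y \<in> S. (x, y) \<in> Ed i} = {y. (x, y) \<in> Ed i}" using Ed_S[OF i] by auto
    then show "(\<Sum>y\<in>S. if (x, y) \<in> Ed i then 1 else (0::nat)) = card {y. (x, y) \<in> Ed i}"
      using sum_ind_card[OF finS] by simp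
  qed
  finally show ?thesis .
qed

lemma G_flow: "pito_flow V E N g M sv st T K G"
  unfolding pito_flow_def
proof (intro conjI allI ballI)
  fix x y show "G x y \<le> cap x y" by (rule G_cap)
next
  fix x assume x: "x \<in> S - {Src, Snk}"
  have "(\<Sum>i\<in>A. card {y. (y, x) \<in> Ed i}) = (\<Sum>i\<in>A. card {y. (x, y) \<in> Ed i})"
  proof (rule sum.cong[OF refl])
    fix i assume i: "i \<in> A"
    have "x \<noteq> w i 0" "x \<noteq> w i (2 * L i + 5)" using x by (auto simp: w0 wN)
    from walk_deg[OF inj_w this] show "card {y. (y, x) \<in> Ed i} = card {y. (x, y) \<in> Ed i}"
      by (simp add: Ed_def)
  qed
  then show "(\<Sum>y\<in>S. G y x) = (\<Sum>y\<in>S. G x y)" using G_in G_out by simp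
qed

lemma G_value: "flow_value V N M T K G = card A"
proof -
  have "flow_value V N M T K G = (\<Sum>i\<in>A. card {y. (Src, y) \<in> Ed i})"
    unfolding flow_value_def by (rule G_out)
  also have "\<dots> = (\<Sum>i\<in>A. 1)"
  proof (rule sum.cong[OF refl])
    fix i assume i: "i \<in> A"
    have sub: "{y. (Src, y) \<in> Ed i} \<subseteq> {Agent i}"
    proof
      fix y assume "y \<in> {y. (Src, y) \<in> Ed i}"
      then obtain m where m: "m < 2 * L i + 5" "Src = w i m" "y = w i (Suc m)" by (auto simp: Ed_def)
      have r: "rank i (w i m) = m" by (rule rank_w) (use m(1) in simp)
      then have "m = 0" unfolding m(2)[symmetric] by (simp add: rank_def)
      then show "y \<in> {Agent i}" using m w1 by simp
    qed
    have "(w i 0, w i (Suc 0)) \<in> Ed i" unfolding Ed_def by force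
    then have "Agent i \<in> {y. (Src, y) \<in> Ed i}" unfolding w0 w1 by simp
    with sub have "{y. (Src, y) \<in> Ed i} = {Agent i}" by blast
    then show "card {y. (Src, y) \<in> Ed i} = 1" by simp
  qed
  finally show ?thesis by simp
qed

lemma card_occ: "card (occupied_slots N M K asg kk) = card A"
proof -
  have eq: "occupied_slots N M K asg kk = (\<lambda>i. (the (asg i), kk i)) ` A"
  proof (intro set_eqI iffI)
    fix p assume "p \<in> occupied_slots N M K asg kk"
    then obtain j k i where "p = (j, k)" "i < M" "asg i = Some j" "kk i = k" by (auto simp: occupied_slots_def)
    then show "p \<in> (\<lambda>i. (the (asg i), kk i)) ` A" by (force simp: A_def)
  next
    fix p assume "p \<in> (\<lambda>i. (the (asg i), kk i)) ` A"
    then obtain i where i: "i \<in> A" "p = (the (asg i), kk i)" by auto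
    note P = Aprops[OF i(1)]
    show "p \<in> occupied_slots N M K asg kk" using P i unfolding occupied_slots_def by auto
  qed
  have "inj_on (\<lambda>i. (the (asg i), kk i)) A"
  proof (rule inj_onI)
    fix i i' assume i: "i \<in> A" "i' \<in> A" "(the (asg i), kk i) = (the (asg i'), kk i')"
    then show "i = i'" using sol2[OF Aprops(1)[OF i(1)] Aprops(1)[OF i(2)]] Aprops(2)[OF i(1)] Aprops(2)[OF i(2)]
      by (metis option.distinct(1) prod.inject)
  qed
  then show ?thesis using eq card_image by simp
qed

end

lemma occ_le: "card (occupied_slots N M K asg kk) \<le> N * K"
proof -
  have "occupied_slots N M K asg kk \<subseteq> {..<N} \<times> {..<K}" by (auto simp: occupied_slots_def)
  then have "card (occupied_slots N M K asg kk) \<le> card ({..<N} \<times> {..<K})" by (intro card_mono) auto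
  then show ?thesis by (simp add: card_cartesian_product)
qed



definition isMove :: "'v pnode \<Rightarrow> 'v pnode \<Rightarrow> bool" where
  "isMove x y \<longleftrightarrow> (\<exists>a s b s'. x = Aux a s \<and> y = Loc b s')"

context pctx begin

definition "mu h = card {(a, b, s). a \<in> V \<and> b \<in> V \<and> s < (K - 1) * T \<and> a \<noteq> b \<and> h (Aux a s) (Loc b (Suc s)) \<noteq> 0}"

lemma mu_fin: "finite {(a, b, s). a \<in> V \<and> b \<in> V \<and> s < (K - 1) * T \<and> a \<noteq> b \<and> h (Aux a s) (Loc b (Suc s)) \<noteq> 0}"
proof -
  have "{(a, b, s). a \<in> V \<and> b \<in> V \<and> s < (K - 1) * T \<and> a \<noteq> b \<and> h (Aux a s) (Loc b (Suc s)) \<noteq> 0}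
        \<subseteq> V \<times> V \<times> {..<(K - 1) * T}" by auto
  then show ?thesis by (rule finite_subset) (use finV in auto)
qed

lemma swap_reduce:
  assumes fl: "flow h" and ab: "a \<noteq> b"
    and h1: "h (Aux a s) (Loc b (Suc s)) = 1" and h2: "h (Aux b s) (Loc a (Suc s)) = 1"
  shows "\<exists>h'. flow h' \<and> (\<forall>x y. \<not> isMove x y \<longrightarrow> h' x y = h x y) \<and> mu h' < mu h"
proof -
  define s1 where "s1 = Suc s"
  define h' where "h' x y = (if x = Aux a s \<or> x = Aux b s then h x (tr (Loc a s1) (Loc b s1) y) else h x y)" for x y
  have h1': "h (Aux a s) (Loc b s1) = 1" and h2': "h (Aux b s) (Loc a s1) = 1" using h1 h2 by (simp_all add: s1_def)
  have z1: "h (Aux a s) (Loc a s1) = 0"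
  proof (rule ccontr)
    assume "h (Aux a s) (Loc a s1) \<noteq> 0"
    moreover have "h (Aux a s) (Loc b s1) \<noteq> 0" using h1' by simp
    ultimately show False using U2[OF fl] ab by blast
  qed
  have z2: "h (Aux b s) (Loc b s1) = 0"
  proof (rule ccontr)
    assume "h (Aux b s) (Loc b s1) \<noteq> 0"
    moreover have "h (Aux b s) (Loc a s1) \<noteq> 0" using h2' by simp
    ultimately show False using U2[OF fl] ab by blast
  qed
  have "cap (Aux a s) (Loc b s1) \<noteq> 0" using hnz[OF fl] h1' by simp
  from capfrom_Aux[OF this] have c1: "a \<in> V" "b \<in> V" "s < (K - 1) * T" by (auto simp: s1_def)
  have S4: "Aux a s \<in> S" "Aux b s \<in> S" "Loc a s1 \<in> S" "Loc b s1 \<in> S" using c1 by (auto simp: mem_S s1_def)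
  have v1: "h' (Aux a s) (Loc a s1) = 1" using h1' by (simp add: h'_def tr_def)
  have v2: "h' (Aux a s) (Loc b s1) = 0" using z1 ab by (simp add: h'_def tr_def)
  have v3: "h' (Aux b s) (Loc a s1) = 0" using z2 ab by (simp add: h'_def tr_def)
  have v4: "h' (Aux b s) (Loc b s1) = 1" using h2' ab by (simp add: h'_def tr_def)
  have vo: "\<And>x y. x \<noteq> Aux a s \<Longrightarrow> x \<noteq> Aux b s \<Longrightarrow> h' x y = h x y" by (simp add: h'_def)
  have vy: "\<And>x y. y \<noteq> Loc a s1 \<Longrightarrow> y \<noteq> Loc b s1 \<Longrightarrow> h' x y = h x y" by (simp add: h'_def tr_def)
  have capw: "cap (Aux a s) (Loc a s1) = 1" "cap (Aux b s) (Loc b s1) = 1"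
    using c1 by (simp_all add: pito_cap_def s1_def)
  have hcap': "h' x y \<le> cap x y" for x y
  proof (cases "(x = Aux a s \<or> x = Aux b s) \<and> (y = Loc a s1 \<or> y = Loc b s1)")
    case True
    then show ?thesis using v1 v2 v3 v4 capw by auto
  next
    case False
    then have "h' x y = h x y" using vo vy by blast
    then show ?thesis using hcap[OF fl] by simp
  qed
  have insum: "(\<Sum>y\<in>S. h' y x) = (\<Sum>y\<in>S. h y x)" for x
  proof -
    consider "x = Loc a s1" | "x = Loc b s1" | "x \<noteq> Loc a s1 \<and> x \<noteq> Loc b s1" by blast
    then show ?thesis
    proof cases
      case 1
      have "(\<Sum>y\<in>S. h' y x) = (\<Sum>y\<in>S. h (tr (Aux a s) (Aux b s) y) x)"
      proof (rule sum.cong[OF refl])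
        fix y
        show "h' y x = h (tr (Aux a s) (Aux b s) y) x"
          using 1 v1 v3 vo h2' z1 ab by (cases "y = Aux a s"; cases "y = Aux b s") (auto simp: tr_def)
      qed
      also have "\<dots> = (\<Sum>y\<in>S. h y x)" using sum_tr[OF S4(1,2), of "\<lambda>y. h y x"] by simp
      finally show ?thesis .
    next
      case 2
      have "(\<Sum>y\<in>S. h' y x) = (\<Sum>y\<in>S. h (tr (Aux a s) (Aux b s) y) x)"
      proof (rule sum.cong[OF refl])
        fix y
        show "h' y x = h (tr (Aux a s) (Aux b s) y) x"
          using 2 v2 v4 vo h1' z2 ab by (cases "y = Aux a s"; cases "y = Aux b s") (auto simp: tr_def)
      qed
      also have "\<dots> = (\<Sum>y\<in>S. h y x)" using sum_tr[OF S4(1,2), of "\<lambda>y. h y x"] by simp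
      finally show ?thesis .
    next
      case 3
      then show ?thesis using vy by simp
    qed
  qed
  have outsum: "(\<Sum>y\<in>S. h' x y) = (\<Sum>y\<in>S. h x y)" for x
  proof (cases "x = Aux a s \<or> x = Aux b s")
    case True
    then have "(\<Sum>y\<in>S. h' x y) = (\<Sum>y\<in>S. h x (tr (Loc a s1) (Loc b s1) y))" by (simp add: h'_def)
    also have "\<dots> = (\<Sum>y\<in>S. h x y)" using sum_tr[OF S4(3,4), of "h x"] by simp
    finally show ?thesis .
  next
    case False then show ?thesis using vo by simp
  qed
  have fl': "flow h'"
    unfolding pito_flow_def
  proof (intro conjI allI ballI)
    fix x y show "h' x y \<le> cap x y" by (rule hcap')
  next
    fix x assume "x \<in> S - {Src, Snk}"
    then show "(\<Sum>y\<in>S. h' y x) = (\<Sum>y\<in>S. h' x y)" using insum outsum hcons[OF fl] by simp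
  qed
  have mv: "\<forall>x y. \<not> isMove x y \<longrightarrow> h' x y = h x y"
  proof (intro allI impI)
    fix x y :: "'v pnode" assume "\<not> isMove x y"
    then have "\<not> ((x = Aux a s \<or> x = Aux b s) \<and> (y = Loc a s1 \<or> y = Loc b s1))" by (auto simp: isMove_def)
    then show "h' x y = h x y" using vo vy by blast
  qed
  let ?X = "\<lambda>h. {(a, b, s). a \<in> V \<and> b \<in> V \<and> s < (K - 1) * T \<and> a \<noteq> b \<and> h (Aux a s) (Loc b (Suc s)) \<noteq> 0}"
  have sub: "?X h' \<subseteq> ?X h"
  proof
    fix p assume p: "p \<in> ?X h'"
    then obtain a' b' s' where pp: "p = (a', b', s')" "a' \<in> V" "b' \<in> V" "s' < (K - 1) * T" "a' \<noteq> b'"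
      "h' (Aux a' s') (Loc b' (Suc s')) \<noteq> 0" by auto
    have "h (Aux a' s') (Loc b' (Suc s')) \<noteq> 0"
    proof (cases "Aux a' s' = Aux a s \<or> Aux a' s' = Aux b s")
      case False then show ?thesis using vo pp(6) by simp
    next
      case True
      then have ss: "s' = s" by auto
      show ?thesis
      proof (cases "b' = a \<or> b' = b")
        case False then show ?thesis using vy pp(6) ss by (simp add: s1_def)
      next
        case True
        then show ?thesis using pp(5,6) ss \<open>Aux a' s' = Aux a s \<or> Aux a' s' = Aux b s\<close> v2 v3 h1 h2
          by (auto simp: s1_def)
      qed
    qed
    then show "p \<in> ?X h" using pp by auto
  qed
  have inn: "(a, b, s) \<in> ?X h" using c1 ab h1 by auto
  have nin: "(a, b, s) \<notin> ?X h'" using v2 by (simp add: s1_def)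
  have "?X h' \<subset> ?X h" using sub inn nin by blast
  then have "mu h' < mu h" unfolding mu_def by (rule psubset_card_mono[OF mu_fin])
  then show ?thesis using fl' mv by blast
qed

lemma exists_good:
  assumes ff: "flow f"
  shows "\<exists>h. flow h \<and> (\<forall>x y. \<not> isMove x y \<longrightarrow> h x y = f x y) \<and>
     (\<forall>a b t. a \<noteq> b \<longrightarrow> h (Aux a t) (Loc b (Suc t)) = 1 \<longrightarrow> h (Aux b t) (Loc a (Suc t)) = 1 \<longrightarrow> False)"
proof -
  let ?P = "\<lambda>h. flow h \<and> (\<forall>x y. \<not> isMove x y \<longrightarrow> h x y = f x y)"
  have "?P f" using ff by simp
  from ex_has_least_nat[of ?P f mu, OF this] obtain h where h: "?P h" and mn: "\<forall>h'. ?P h' \<longrightarrow> mu h \<le> mu h'"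
    by blast
  have "\<forall>a b t. a \<noteq> b \<longrightarrow> h (Aux a t) (Loc b (Suc t)) = 1 \<longrightarrow> h (Aux b t) (Loc a (Suc t)) = 1 \<longrightarrow> False"
  proof (intro allI impI)
    fix a b t assume "a \<noteq> b" "h (Aux a t) (Loc b (Suc t)) = 1" "h (Aux b t) (Loc a (Suc t)) = 1"
    from swap_reduce[OF conjunct1[OF h] this] obtain h' where
      h': "flow h'" "\<forall>x y. \<not> isMove x y \<longrightarrow> h' x y = h x y" "mu h' < mu h" by blast
    have "?P h'" using h' h by simp
    then show False using mn h'(3) by (meson not_le)
  qed
  then show ?thesis using h by blast
qed

lemma value_card:
  assumes fl: "flow h"
  shows "flow_value V N M T K h = card {i. i < M \<and> h Src (Agent i) = 1}"
proof -
  let ?I = "{i. i < M \<and> h Src (Agent i) = 1}"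
  have "flow_value V N M T K h = (\<Sum>y\<in>S. if y \<in> Agent ` ?I then 1 else (0::nat))"
    unfolding flow_value_def
  proof (rule sum.cong[OF refl])
    fix y
    show "h Src y = (if y \<in> Agent ` ?I then 1 else 0)"
    proof (cases "\<exists>i. y = Agent i \<and> i < M")
      case True
      then obtain i where i: "y = Agent i" "i < M" by blast
      have "h Src (Agent i) \<le> 1" using hcap[OF fl, of Src "Agent i"] i by (simp add: pito_cap_def)
      then show ?thesis using i by auto
    next
      case False
      then have "cap Src y = 0" by (cases y) (auto simp: pito_cap_def)
      then show ?thesis using hzero[OF fl] False by auto
    qed
  qed
  also have "\<dots> = card {y \<in> S. y \<in> Agent ` ?I}" by (rule sum_ind_card[OF finS])
  also have "{y \<in> S. y \<in> Agent ` ?I} = Agent ` ?I" by (auto simp: mem_S)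
  also have "card (Agent ` ?I) = card ?I" by (rule card_image) (simp add: inj_on_def)
  finally show ?thesis .
qed

end

theorem theorem2:
  fixes V :: "'v set" and E :: "('v \<times> 'v) set"
    and N M T K :: nat and g :: "nat \<Rightarrow> 'v" and sv :: "nat \<Rightarrow> 'v" and st :: "nat \<Rightarrow> nat"
    and f :: "'v pnode \<Rightarrow> 'v pnode \<Rightarrow> nat"
  assumes "finite V" and "E \<subseteq> V \<times> V" and "sym E"
    and "\<forall>u\<in>V. \<forall>v\<in>V. (u, v) \<in> E\<^sup>*"
    and "\<forall>j<N. g j \<in> V" and "inj_on g {..<N}"
    and "\<forall>i<M. sv i \<in> V \<and> st i \<le> (K - 1) * T"
    and "T > 0" and "K \<ge> 1"
    and "pito_max_flow V E N g M sv st T K f"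
  shows "\<exists>asg kk \<pi>. tapf_solution E N g M sv st T K asg kk \<pi>
           \<and> (\<forall>i<M. asg i \<noteq> None \<longleftrightarrow> f Src (Agent i) = 1)
           \<and> (\<forall>j<N. \<forall>k<K. (j, k) \<in> occupied_slots N M K asg kk
                  \<longleftrightarrow> f (Aux (g j) (k * T)) (Slot j k) = 1)
           \<and> (\<forall>asg' kk' \<pi>'. tapf_solution E N g M sv st T K asg' kk' \<pi>' \<longrightarrow>
                  idle_time N M T K asg kk \<le> idle_time N M T K asg' kk')"
proof -
  interpret P: pctx V E N M T K g sv st
    by unfold_locales (use assms in auto)
  have ff: "pito_flow V E N g M sv st T K f" and fmax: "\<And>f'. pito_flow V E N g M sv st T K f' \<Longrightarrow>
      flow_value V N M T K f' \<le> flow_value V N M T K f"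
    using assms(10) unfolding pito_max_flow_def by auto
  obtain h where h: "pito_flow V E N g M sv st T K h" "\<forall>x y. \<not> isMove x y \<longrightarrow> h x y = f x y"
    "\<forall>a b t. a \<noteq> b \<longrightarrow> h (Aux a t) (Loc b (Suc t)) = 1 \<longrightarrow> h (Aux b t) (Loc a (Suc t)) = 1 \<longrightarrow> False"
    using P.exists_good[OF ff] by blast
  interpret G: gflow V E N M T K g sv st h
    by unfold_locales (use h in blast)+
  interpret S0: sol V E N M T K g sv st G.asg G.kk G.pth
    by unfold_locales (rule G.solution)
  have srcA: "\<And>i. h Src (Agent i) = f Src (Agent i)" using h(2) by (simp add: isMove_def)
  have slotA: "\<And>u t j k. h (Aux u t) (Slot j k) = f (Aux u t) (Slot j k)" using h(2) by (simp add: isMove_def)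
  have "flow_value V N M T K f = flow_value V N M T K h"
    unfolding flow_value_def using h(2) by (simp add: isMove_def)
  also have "\<dots> = card {i. i < M \<and> h Src (Agent i) = 1}" by (rule P.value_card[OF h(1)])
  also have "{i. i < M \<and> h Src (Agent i) = 1} = S0.A" unfolding S0.A_def using G.asg_iff by auto
  finally have vf: "flow_value V N M T K f = card (occupied_slots N M K G.asg G.kk)" using S0.card_occ by simp
  show ?thesis
  proof (intro exI conjI allI impI)
    show "tapf_solution E N g M sv st T K G.asg G.kk G.pth" by (rule G.solution)
  next
    fix i assume "i < M"
    then show "G.asg i \<noteq> None \<longleftrightarrow> f Src (Agent i) = 1" using G.asg_iff srcA by simp
  next
    fix j k assume "j < N" "k < K"
    then show "(j, k) \<in> occupied_slots N M K G.asg G.kk \<longleftrightarrow> f (Aux (g j) (k * T)) (Slot j k) = 1"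
      using G.occ_iff slotA by simp
  next
    fix asg' kk' \<pi>' assume s': "tapf_solution E N g M sv st T K asg' kk' \<pi>'"
    interpret S1: sol V E N M T K g sv st asg' kk' \<pi>'
      by unfold_locales (rule s')
    have "card (occupied_slots N M K asg' kk') = flow_value V N M T K S1.G"
      using S1.card_occ S1.G_value by simp
    also have "\<dots> \<le> flow_value V N M T K f" by (rule fmax[OF S1.G_flow])
    finally have le: "card (occupied_slots N M K asg' kk') \<le> card (occupied_slots N M K G.asg G.kk)"
      using vf by simp
    show "idle_time N M T K G.asg G.kk \<le> idle_time N M T K asg' kk'"
      unfolding idle_time_def by (intro mult_le_mono2 diff_le_mono2 le)
  qed
qed

end
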